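(* Let $\mathbb F$ be any field, $n\ge k>1$, let $\mathcal K\subseteq M_{n\times k}(\mathbb F)$ be a linear variety such that $\det_{n,k}(X)=0$ for all $X\in\mathcal K$, and let $B^*\subseteq[n]\times[k]$ be a cobasis of $\mathcal M(\mathcal K)$. If there exist $1\le i'\le n$ and $1\le j'\le k$ such that $|B^*\cap(\{i'\}\times[k])|=l$ and $B^*\cap([n]\times\{j'\})=\varnothing$, then there exists a linear variety $\mathcal K'\subseteq M_{(n-1)\times(k-1)}(\mathbb F)$ with $\operatorname{codim}(\mathcal K')\le\operatorname{codim}(\mathcal K)-l$ such that $\det_{n-1,k-1}(X')=0$ for all $X'\in\mathcal K'$.
   Context: A linear variety is a nonempty set $\mathbf s+V$ with $V$ a linear subspace (uniquely determined); codimension = ambient dimension minus $\dim V$. Identify $M_{n\times k}(\mathbb F)$ with $\mathbb F^{[n]\times[k]}$. Matroid $\mathcal M(\mathcal K)$ of $\mathcal K=\mathbf s+V\subseteq\mathbb F^E$: matroid on $E$ with rank function $r(S)=\dim\operatorname{span}\{x_e|_V:e\in S\}$, $x_e$ coordinate functionals; cobasis = complement of a basis. Cullis' determinant: $\det_{n,k}(X)=\sum_{c}\operatorname{sgn}(c)\det(X[c|))$, sum over $k$-subsets $c=\{c(1)<\dots<c(k)\}$ of $[n]$, $X[c|)$ the submatrix of rows in $c$, $\operatorname{sgn}(c)=(-1)^{\sum_\alpha(c(\alpha)-\alpha)}$. *)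

theory Defs
  imports "HOL-Analysis.Analysis" "HOL-Combinatorics.Combinatorics" "HOL-Library.Function_Algebras"
begin

text \<open>Matrices in M_{n x k}(F) are identified with F^([n] x [k]): we represent them as
  functions on nat x nat that vanish outside the index set [n] x [k] (indices start at 1).\<close>

definition idx :: "nat \<Rightarrow> nat \<Rightarrow> (nat \<times> nat) set" where
  "idx n k = {1..n} \<times> {1..k}"

definition supported :: "(nat \<times> nat) set \<Rightarrow> ((nat \<times> nat) \<Rightarrow> 'a::zero) set" where
  "supported E = {x. \<forall>e. e \<notin> E \<longrightarrow> x e = 0}"

definition fscale :: "'a::field \<Rightarrow> ('b \<Rightarrow> 'a) \<Rightarrow> ('b \<Rightarrow> 'a)" where
  "fscale c x = (\<lambda>e. c * x e)"

definition linear_variety :: "(nat \<times> nat) set \<Rightarrow> ((nat \<times> nat) \<Rightarrow> 'a::field) set \<Rightarrow> bool" where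
  "linear_variety E K \<longleftrightarrow> (\<exists>s V. s \<in> supported E \<and> module.subspace fscale V \<and>
      V \<subseteq> supported E \<and> K = (\<lambda>v. s + v) ` V)"

text \<open>The (uniquely determined) direction space V of a linear variety K = s + V.\<close>
definition direction :: "('b \<Rightarrow> 'a::field) set \<Rightarrow> ('b \<Rightarrow> 'a) set" where
  "direction K = {x - y | x y. x \<in> K \<and> y \<in> K}"

definition codim :: "(nat \<times> nat) set \<Rightarrow> ((nat \<times> nat) \<Rightarrow> 'a::field) set \<Rightarrow> nat" where
  "codim E K = card E - vector_space.dim fscale (direction K)"

text \<open>Matroid M(K): a set S \<subseteq> E is independent iff the family of restricted coordinate
  functionals (x_e|_V)_{e in S} is linearly independent over V = direction K.\<close>
definition mat_indep :: "((nat \<times> nat) \<Rightarrow> 'a::field) set \<Rightarrow> (nat \<times> nat) set \<Rightarrow> bool" where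
  "mat_indep V S \<longleftrightarrow> (\<forall>c. (\<forall>v\<in>V. (\<Sum>e\<in>S. c e * v e) = 0) \<longrightarrow> (\<forall>e\<in>S. c e = 0))"

definition mat_basis :: "(nat \<times> nat) set \<Rightarrow> ((nat \<times> nat) \<Rightarrow> 'a::field) set \<Rightarrow> (nat \<times> nat) set \<Rightarrow> bool" where
  "mat_basis E V B \<longleftrightarrow> B \<subseteq> E \<and> mat_indep V B \<and> (\<forall>e\<in>E - B. \<not> mat_indep V (insert e B))"

definition mat_cobasis :: "(nat \<times> nat) set \<Rightarrow> ((nat \<times> nat) \<Rightarrow> 'a::field) set \<Rightarrow> (nat \<times> nat) set \<Rightarrow> bool" where
  "mat_cobasis E V C \<longleftrightarrow> (\<exists>B. mat_basis E V B \<and> C = E - B)"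

text \<open>Cullis' determinant det_{n,k}; c(alpha) is the alpha-th smallest element of c.\<close>
definition cullis_det :: "nat \<Rightarrow> nat \<Rightarrow> ((nat \<times> nat) \<Rightarrow> 'a::field) \<Rightarrow> 'a" where
  "cullis_det n k X = (\<Sum>c\<in>{c. c \<subseteq> {1..n} \<and> card c = k}.
     let cs = sorted_list_of_set c in
     (-1) ^ (\<Sum>\<alpha>=1..k. cs ! (\<alpha> - 1) - \<alpha>) *
     (\<Sum>p\<in>{p. p permutes {1..k}}. of_int (sign p) * (\<Prod>\<alpha>=1..k. X (cs ! (\<alpha> - 1), p \<alpha>))))"

end

theory Submission
  imports Defs
begin


definition Dk :: "nat \<Rightarrow> (nat \<Rightarrow> nat \<Rightarrow> 'a::field) \<Rightarrow> 'a" where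
  "Dk k M = (\<Sum>p\<in>{p. p permutes {1..k}}. of_int (sign p) * (\<Prod>\<alpha>=1..k. M \<alpha> (p \<alpha>)))"

definition sh :: "nat \<Rightarrow> nat \<Rightarrow> nat" where
  "sh m r = (if r < m then r else Suc r)"

definition cyc :: "nat \<Rightarrow> nat \<Rightarrow> nat \<Rightarrow> nat" where
  "cyc q k x = (if x = k then q else if q \<le> x \<and> x < k then Suc x else x)"

lemma cyc_step: "q < k \<Longrightarrow> cyc q k = Transposition.transpose q (Suc q) \<circ> cyc (Suc q) k"
  by (auto simp: fun_eq_iff cyc_def Transposition.transpose_def)

lemma cyc_id: "cyc k k = id"
  by (auto simp: fun_eq_iff cyc_def)

lemma cyc_props: "1 \<le> q \<Longrightarrow> q \<le> k \<Longrightarrow> cyc q k permutes {1..k} \<and> sign (cyc q k) = (-1)^(k-q)"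
proof (induction "k - q" arbitrary: q)
  case 0
  then have "q = k" by simp
  then show ?case using permutes_id[of "{1..k}"] by (simp add: cyc_id id_def)
next
  case (Suc m)
  then have qk: "q < k" by simp
  have IH: "cyc (Suc q) k permutes {1..k} \<and> sign (cyc (Suc q) k) = (-1)^(k - Suc q)"
    using Suc by simp
  have t: "Transposition.transpose q (Suc q) permutes {1..k}"
    using Suc qk by (intro permutes_swap_id) auto
  have "sign (cyc q k) = sign (Transposition.transpose q (Suc q)) * sign (cyc (Suc q) k)"
    unfolding cyc_step[OF qk]
    by (rule sign_compose) (use IH t permutation_permutes in blast)+
  also have "\<dots> = (-1)^(k-q)" using IH qk
    by (simp add: sign_swap_id) (metis Suc_diff_Suc power_Suc mult_minus1)
  finally show ?case using IH t cyc_step[OF qk] by (simp add: permutes_compose)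
qed

lemma sh_mono: "strict_mono (sh q)"
  by (rule strict_monoI) (simp add: sh_def)

lemma sh_bij: "1 \<le> q \<Longrightarrow> q \<le> k \<Longrightarrow> bij_betw (sh q) {1..k-1} ({1..k} - {q})"
  unfolding bij_betw_def
proof (intro conjI)
  show "inj_on (sh q) {1..k-1}" using sh_mono strict_mono_imp_inj_on inj_on_subset by blast
  assume a: "1 \<le> q" "q \<le> k"
  show "sh q ` {1..k - 1} = {1..k} - {q}"
  proof (intro set_eqI iffI)
    fix x assume "x \<in> {1..k} - {q}"
    then show "x \<in> sh q ` {1..k - 1}"
      using a by (intro image_eqI[of _ _ "if x < q then x else x - 1"]) (auto simp: sh_def)
  next
    fix x assume "x \<in> sh q ` {1..k - 1}"
    then obtain y where "y \<in> {1..k-1}" "x = sh q y" by blast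
    then show "x \<in> {1..k} - {q}" using a by (auto simp: sh_def)
  qed
qed

lemma Dk_cong: "(\<And>\<alpha> \<beta>. \<alpha> \<in> {1..k} \<Longrightarrow> \<beta> \<in> {1..k} \<Longrightarrow> M \<alpha> \<beta> = M' \<alpha> \<beta>) \<Longrightarrow> Dk k M = Dk k M'"
  unfolding Dk_def
proof (intro sum.cong refl arg_cong2[where f="(*)"] prod.cong)
  fix p \<alpha> assume h: "\<And>\<alpha> \<beta>. \<alpha> \<in> {1..k} \<Longrightarrow> \<beta> \<in> {1..k} \<Longrightarrow> M \<alpha> \<beta> = M' \<alpha> \<beta>"
    and p: "p \<in> {p. p permutes {1..k}}" and a: "\<alpha> \<in> {1..k}"
  have "p \<alpha> \<in> {1..k}" using permutes_in_image[of p "{1..k}" \<alpha>] p a by simp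
  then show "M \<alpha> (p \<alpha>) = M' \<alpha> (p \<alpha>)" using h a by blast
qed

lemma prod_zero_col:
  fixes k :: nat
  assumes p: "p permutes {1..k}" and j: "j \<in> {1..k}" and z: "\<And>\<alpha>. \<alpha> \<in> {1..k} \<Longrightarrow> \<alpha> \<noteq> q \<Longrightarrow> M \<alpha> j = 0"
    and pq: "p q \<noteq> j"
  shows "(\<Prod>\<alpha>=1..k. M \<alpha> (p \<alpha>)) = (0::'a::field)"
proof -
  let ?a = "inv p j"
  have a1: "p ?a = j" using p by (simp add: permutes_inverses(1))
  have ip: "inv p permutes {1..k}" using p by (rule permutes_inv)
  have a2: "?a \<in> {1..k}" using permutes_in_image[OF ip, of j] j by simp
  have "?a \<noteq> q" using a1 pq by auto
  then have "M ?a (p ?a) = 0" using a1 a2 z by simp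
  then show ?thesis using a2 by (intro prod_zero) blast+
qed

lemma Dk_zero_col:
  fixes k :: nat
  assumes j: "j \<in> {1..k}" and z: "\<And>\<alpha>. \<alpha> \<in> {1..k} \<Longrightarrow> M \<alpha> j = 0"
  shows "Dk k M = (0::'a::field)"
proof -
  have "(\<Prod>\<alpha>=1..k. M \<alpha> (p \<alpha>)) = 0" if "p permutes {1..k}" for p
  proof -
    let ?a = "inv p j"
    have a1: "p ?a = j" using that by (simp add: permutes_inverses(1))
    have ip: "inv p permutes {1..k}" using that by (rule permutes_inv)
    have a2: "?a \<in> {1..k}" using permutes_in_image[OF ip, of j] j by simp
    have "M ?a (p ?a) = 0" using a1 a2 z by simp
    then show ?thesis using a2 by (intro prod_zero) blast+
  qed
  then show ?thesis unfolding Dk_def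
    by (intro sum.neutral ballI) (metis mem_Collect_eq mult_zero_right)
qed

lemma permutes_drop_last:
  fixes k :: nat
  assumes "r permutes {1..k}" "r k = k" "1 \<le> k"
  shows "r permutes {1..k-1}"
proof -
  obtain m where m: "k = Suc m" using assms(3) by (cases k) auto
  have e: "{1..k} = insert k {1..k-1}" unfolding m by (simp add: atLeastAtMostSuc_conv)
  have "r permutes insert k {1..k-1}" using assms(1) by (simp only: e[symmetric])
  then have "Transposition.transpose k (r k) \<circ> r permutes {1..k-1}"
    by (rule permutes_insert_lemma)
  then show ?thesis using assms(2) by simp
qed

lemma minus_one_pow_parity:
  fixes q k j :: nat
  assumes "q \<le> k" "j \<le> k"
  shows "(-1::'a::ring_1)^(k-j) * (-1)^(k-q) = (-1)^(q+j)"
proof -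
  have "(-1::'a)^(k-j) * (-1)^(k-q) = (-1)^(k-j+(k-q))" by (simp add: power_add)
  also have "\<dots> = (-1)^(q+j)"
  proof -
    have s: "k-j+(k-q) + (q+j) = 2*k" using assms by simp
    have "even (k-j+(k-q)) \<longleftrightarrow> even (q+j)"
      using s even_add[of "k-j+(k-q)" "q+j"] by (metis dvd_triv_left)
    then show ?thesis by (simp add: minus_one_power_iff)
  qed
  finally show ?thesis .
qed

lemma laplace_unit:
  assumes q: "q \<in> {1..k}" and j: "j \<in> {1..k}"
    and col: "\<And>\<alpha>. \<alpha> \<in> {1..k} \<Longrightarrow> M \<alpha> j = (if \<alpha> = q then 1 else 0)"
  shows "Dk k M = (-1)^(q+j) * Dk (k-1) (\<lambda>a b. M (sh q a) (sh j b))"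
proof -
  let ?P = "{p. p permutes {1..k}}"
  let ?P1 = "{p. p permutes {1..k} \<and> p q = j}"
  let ?P' = "{p. p permutes {1..k-1}}"
  let ?G = "\<lambda>p. of_int (sign p) * (\<Prod>\<alpha>=1..k. M \<alpha> (p \<alpha>))"
  have "Dk k M = sum ?G ?P1"
    unfolding Dk_def
  proof (rule sum.mono_neutral_right)
    show "finite ?P" by (rule finite_permutations) simp
    show "?P1 \<subseteq> ?P" by auto
    show "\<forall>p\<in>?P - ?P1. ?G p = 0"
    proof
      fix p assume "p \<in> ?P - ?P1"
      then have pp: "p permutes {1..k}" and pq: "p q \<noteq> j" by auto
      have z: "\<And>\<alpha>. \<alpha> \<in> {1..k} \<Longrightarrow> \<alpha> \<noteq> q \<Longrightarrow> M \<alpha> j = 0" using col by simp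
      have "(\<Prod>\<alpha>=1..k. M \<alpha> (p \<alpha>)) = 0" using prod_zero_col[where M=M and q=q, OF pp j z pq] .
      then show "?G p = 0" by simp
    qed
  qed
  define cq where "cq = cyc q k"
  define cj where "cj = cyc j k"
  have cqp: "cq permutes {1..k}" and cqs: "sign cq = (-1)^(k-q)"
    using cyc_props[of q k] q by (auto simp: cq_def)
  have cjp: "cj permutes {1..k}" and cjs: "sign cj = (-1)^(k-j)"
    using cyc_props[of j k] j by (auto simp: cj_def)
  have cq_sh: "cq a = sh q a" if "a \<in> {1..k-1}" for a
    using that by (auto simp: cq_def cyc_def sh_def)
  have cj_sh: "cj a = sh j a" if "a \<in> {1..k-1}" for a
    using that by (auto simp: cj_def cyc_def sh_def)
  have cqk: "cq k = q" and cjk: "cj k = j" by (auto simp: cq_def cj_def cyc_def)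
  have icq: "inv cq q = k" using cqk permutes_inverses(2)[OF cqp, of k] by simp
  have icj: "inv cj j = k" using cjk permutes_inverses(2)[OF cjp, of k] by simp
  have k1: "1 \<le> k" using q by simp
  have "(\<Sum>p'\<in>?P'. ?G (cj \<circ> p' \<circ> inv cq)) = sum ?G ?P1"
  proof (rule sum.reindex_bij_witness[where i="\<lambda>p. inv cj \<circ> p \<circ> cq" and j="\<lambda>p'. cj \<circ> p' \<circ> inv cq"])
    fix p' assume "p' \<in> ?P'"
    then have p': "p' permutes {1..k-1}" by simp
    then have p'k: "p' permutes {1..k}" by (rule permutes_subset) auto
    show "inv cj \<circ> (cj \<circ> p' \<circ> inv cq) \<circ> cq = p'"
      by (simp add: fun_eq_iff permutes_inverses[OF cqp] permutes_inverses[OF cjp])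
    have "cj \<circ> p' \<circ> inv cq permutes {1..k}"
      by (intro permutes_compose permutes_inv cqp cjp p'k)
    moreover have "p' k = k" using p' by (intro permutes_not_in) auto
    ultimately show "cj \<circ> p' \<circ> inv cq \<in> ?P1" using icq cjk by simp
  next
    fix p assume "p \<in> ?P1"
    then have p: "p permutes {1..k}" "p q = j" by auto
    show "cj \<circ> (inv cj \<circ> p \<circ> cq) \<circ> inv cq = p"
      by (simp add: fun_eq_iff permutes_inverses[OF cqp] permutes_inverses[OF cjp])
    have "inv cj \<circ> p \<circ> cq permutes {1..k}"
      by (intro permutes_compose permutes_inv cqp cjp p)
    moreover have "(inv cj \<circ> p \<circ> cq) k = k" using cqk p icj by simp
    ultimately show "inv cj \<circ> p \<circ> cq \<in> ?P'" using permutes_drop_last k1 by simp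
  qed simp
  also note \<open>Dk k M = sum ?G ?P1\<close>[symmetric]
  finally have D1: "Dk k M = (\<Sum>p'\<in>?P'. ?G (cj \<circ> p' \<circ> inv cq))" ..
  have "?G (cj \<circ> p' \<circ> inv cq) = (-1)^(q+j) * (of_int (sign p') * (\<Prod>a=1..k-1. M (sh q a) (sh j (p' a))))"
    if "p' \<in> ?P'" for p'
  proof -
    have p': "p' permutes {1..k-1}" using that by simp
    then have p'k: "p' permutes {1..k}" by (rule permutes_subset) auto
    have "sign (cj \<circ> p' \<circ> inv cq) = sign cj * sign p' * sign (inv cq)"
    proof -
      have pc: "permutation cj" "permutation p'" "permutation (inv cq)"
        using cjp p'k permutes_inv[OF cqp] permutation_permutes by blast+
      then have "permutation (cj \<circ> p')" by (simp add: permutation_compose)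
      then show ?thesis using pc by (simp add: sign_compose)
    qed
    also have "\<dots> = (-1)^(k-j) * sign p' * (-1)^(k-q)"
      using cjs cqs sign_inverse[of cq] cqp permutation_permutes by fastforce
    finally have sg: "of_int (sign (cj \<circ> p' \<circ> inv cq)) = ((-1)^(k-j) * (-1)^(k-q)) * (of_int (sign p') :: 'a)"
      by simp
    let ?p = "cj \<circ> p' \<circ> inv cq"
    have "p' k = k" using p' k1 by (intro permutes_not_in) auto
    then have pq: "?p q = j" using icq cjk by simp
    have "(\<Prod>\<alpha>=1..k. M \<alpha> (?p \<alpha>)) = M q (?p q) * (\<Prod>\<alpha>\<in>{1..k}-{q}. M \<alpha> (?p \<alpha>))"
      by (rule prod.remove) (use q in auto)
    also have "\<dots> = (\<Prod>\<alpha>\<in>{1..k}-{q}. M \<alpha> (?p \<alpha>))" using pq col q by simp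
    also have "\<dots> = (\<Prod>a=1..k-1. M (sh q a) (?p (sh q a)))"
      by (rule prod.reindex_bij_betw[symmetric]) (rule sh_bij, use q in auto)
    also have "\<dots> = (\<Prod>a=1..k-1. M (sh q a) (sh j (p' a)))"
    proof (rule prod.cong[OF refl])
      fix a assume a: "a \<in> {1..k-1}"
      have "inv cq (sh q a) = a" using cq_sh[OF a] permutes_inverses(2)[OF cqp, of a] by simp
      moreover have "p' a \<in> {1..k-1}" using permutes_in_image[OF p', of a] a by simp
      ultimately show "M (sh q a) (?p (sh q a)) = M (sh q a) (sh j (p' a))"
        using cj_sh by simp
    qed
    finally have pr: "(\<Prod>\<alpha>=1..k. M \<alpha> (?p \<alpha>)) = (\<Prod>a=1..k-1. M (sh q a) (sh j (p' a)))" .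
    have mo: "(-1::'a)^(k-j) * (-1)^(k-q) = (-1)^(q+j)" using minus_one_pow_parity[of q k j] q j by simp
    show ?thesis unfolding sg pr mo by (simp only: mult.assoc)
  qed
  then have "Dk k M = (\<Sum>p'\<in>?P'. (-1)^(q+j) * (of_int (sign p') * (\<Prod>a=1..k-1. M (sh q a) (sh j (p' a)))))"
    using D1 by simp
  also have "\<dots> = (-1)^(q+j) * Dk (k-1) (\<lambda>a b. M (sh q a) (sh j b))"
    unfolding Dk_def by (simp add: sum_distrib_left)
  finally show ?thesis .
qed

definition Inc :: "nat \<Rightarrow> nat \<Rightarrow> (nat \<Rightarrow> nat) set" where
  "Inc n k = {f. (\<forall>\<alpha>\<in>{1..k}. 1 \<le> f \<alpha> \<and> f \<alpha> \<le> n) \<and> (\<forall>\<alpha>\<in>{1..k}. \<forall>\<beta>\<in>{1..k}. \<alpha> < \<beta> \<longrightarrow> f \<alpha> < f \<beta>)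
     \<and> (\<forall>\<alpha>. \<alpha> \<notin> {1..k} \<longrightarrow> f \<alpha> = 0)}"

definition cterm :: "nat \<Rightarrow> ((nat \<times> nat) \<Rightarrow> 'a::field) \<Rightarrow> (nat \<Rightarrow> nat) \<Rightarrow> 'a" where
  "cterm k X f = (-1)^(\<Sum>\<alpha>=1..k. f \<alpha> - \<alpha>) * Dk k (\<lambda>\<alpha> \<beta>. X (f \<alpha>, \<beta>))"

definition fc :: "nat \<Rightarrow> nat set \<Rightarrow> nat \<Rightarrow> nat" where
  "fc k c = (\<lambda>\<alpha>. if \<alpha> \<in> {1..k} then sorted_list_of_set c ! (\<alpha> - 1) else 0)"

lemma Inc_inj: "f \<in> Inc n k \<Longrightarrow> inj_on f {1..k}"
proof (rule inj_onI)
  fix x y assume f: "f \<in> Inc n k" and xy: "x \<in> {1..k}" "y \<in> {1..k}" "f x = f y"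
  have m: "\<forall>\<alpha>\<in>{1..k}. \<forall>\<beta>\<in>{1..k}. \<alpha> < \<beta> \<longrightarrow> f \<alpha> < f \<beta>" using f unfolding Inc_def by blast
  show "x = y"
  proof (rule ccontr)
    assume "x \<noteq> y"
    then have "x < y \<or> y < x" by arith
    then show False using m xy by (metis less_irrefl)
  qed
qed

lemma sorted_Inc:
  assumes f: "f \<in> Inc n k"
  shows "sorted_list_of_set (f ` {1..k}) = map f [1..<Suc k]"
proof -
  have "sorted_wrt (<) (map f [1..<Suc k])"
    unfolding sorted_wrt_iff_nth_less
  proof (intro allI impI)
    fix i j assume ij: "i < j" "j < length (map f [1..<Suc k])"
    then have "[1..<Suc k] ! i = Suc i" "[1..<Suc k] ! j = Suc j" "i < k" "j < k"
      by (simp_all del: upt_Suc add: nth_upt)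
    then show "map f [1..<Suc k] ! i < map f [1..<Suc k] ! j"
      using f ij unfolding Inc_def by (simp del: upt_Suc)
  qed
  moreover have "set (map f [1..<Suc k]) = f ` {1..k}"
    by (simp del: upt_Suc add: atLeastLessThanSuc_atLeastAtMost)
  moreover have "length (map f [1..<Suc k]) = card (f ` {1..k})"
    using card_image[OF Inc_inj[OF f]] by simp
  ultimately show ?thesis
    using sorted_list_of_set_unique[of "f ` {1..k}" "map f [1..<Suc k]"] by simp
qed

lemma fc_image:
  assumes f: "f \<in> Inc n k" shows "fc k (f ` {1..k}) = f"
proof
  fix \<alpha>
  show "fc k (f ` {1..k}) \<alpha> = f \<alpha>"
  proof (cases "\<alpha> \<in> {1..k}")
    case True
    then have "\<alpha> - 1 < length [1..<Suc k]" by auto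
    moreover have "[1..<Suc k] ! (\<alpha> - 1) = \<alpha>" using True by (subst nth_upt) auto
    ultimately show ?thesis using True unfolding fc_def sorted_Inc[OF f] by (simp only: nth_map if_True)
  next
    case False
    have "fc k (f ` {1..k}) \<alpha> = 0" unfolding fc_def using False by (simp only: if_False)
    moreover have "f \<alpha> = 0" using f False unfolding Inc_def by blast
    ultimately show ?thesis by simp
  qed
qed

lemma image_Inc:
  assumes f: "f \<in> Inc n k" shows "f ` {1..k} \<in> {c. c \<subseteq> {1..n} \<and> card c = k}"
proof -
  have "f ` {1..k} \<subseteq> {1..n}" using f unfolding Inc_def by auto
  moreover have "card (f ` {1..k}) = k" using card_image[OF Inc_inj[OF f]] by simp
  ultimately show ?thesis by simp
qed

lemma fc_props:
  assumes c: "c \<subseteq> {1..n}" "card c = k"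
  shows "fc k c \<in> Inc n k" "fc k c ` {1..k} = c"
proof -
  let ?cs = "sorted_list_of_set c"
  have fin: "finite c" using c(1) finite_subset by blast
  have set: "set ?cs = c" using fin by (rule set_sorted_list_of_set)
  have len: "length ?cs = k" using c(2) by simp
  have srt: "sorted_wrt (<) ?cs" by (rule strict_sorted_list_of_set)
  have mem: "fc k c \<alpha> \<in> c" if "\<alpha> \<in> {1..k}" for \<alpha>
  proof -
    have "\<alpha> - 1 < length ?cs" using that len by auto
    then have "?cs ! (\<alpha> - 1) \<in> set ?cs" by (rule nth_mem)
    then show ?thesis using that set unfolding fc_def by simp
  qed
  show "fc k c \<in> Inc n k"
    unfolding Inc_def
  proof (intro CollectI conjI ballI allI impI)
    fix \<alpha> assume "\<alpha> \<in> {1..k}"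
    then have "fc k c \<alpha> \<in> {1..n}" using mem c(1) by blast
    then show "1 \<le> fc k c \<alpha>" "fc k c \<alpha> \<le> n" by simp_all
  next
    fix \<alpha> \<beta> assume ab: "\<alpha> \<in> {1..k}" "\<beta> \<in> {1..k}" "\<alpha> < \<beta>"
    then have "?cs ! (\<alpha> - 1) < ?cs ! (\<beta> - 1)"
      using sorted_wrt_nth_less[OF srt, of "\<alpha> - 1" "\<beta> - 1"] len by simp
    then show "fc k c \<alpha> < fc k c \<beta>" using ab unfolding fc_def by simp
  next
    fix \<alpha> :: nat assume h: "\<alpha> \<notin> {1..k}" then show "fc k c \<alpha> = 0" unfolding fc_def by (rule if_not_P)
  qed
  show "fc k c ` {1..k} = c"
  proof (intro set_eqI iffI)
    fix x assume "x \<in> fc k c ` {1..k}" then show "x \<in> c" using mem by blast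
  next
    fix x assume "x \<in> c"
    then have "x \<in> set ?cs" using set by simp
    then obtain i where i: "i < length ?cs" "?cs ! i = x" unfolding in_set_conv_nth by blast
    then have e1: "fc k c (Suc i) = x" and e2: "Suc i \<in> {1..k}" using len unfolding fc_def by simp_all
    show "x \<in> fc k c ` {1..k}" using rev_image_eqI[where f="fc k c", OF e2 e1[symmetric]] .
  qed
qed

lemma finite_Inc: "finite (Inc n k)"
proof -
  have "Inc n k \<subseteq> fc k ` {c. c \<subseteq> {1..n} \<and> card c = k}"
  proof
    fix f assume f: "f \<in> Inc n k"
    have "f = fc k (f ` {1..k})" using fc_image[OF f] by simp
    then show "f \<in> fc k ` {c. c \<subseteq> {1..n} \<and> card c = k}" using image_Inc[OF f] by (rule image_eqI)
  qed
  moreover have "finite {c. c \<subseteq> {1..n} \<and> card c = k}"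
    by (rule finite_subset[of _ "Pow {1..n}"]) auto
  then have "finite (fc k ` {c. c \<subseteq> {1..n} \<and> card c = k})" by (rule finite_imageI)
  ultimately show ?thesis by (rule finite_subset)
qed

lemma cullis_Inc: "cullis_det n k X = (\<Sum>f\<in>Inc n k. cterm k X f)"
proof -
  let ?C = "{c. c \<subseteq> {1..n} \<and> card c = k}"
  have "cullis_det n k X = (\<Sum>c\<in>?C. cterm k X (fc k c))"
    unfolding cullis_det_def
  proof (intro sum.cong refl)
    fix c assume "c \<in> ?C"
    show "(let cs = sorted_list_of_set c in (-1) ^ (\<Sum>\<alpha>=1..k. cs ! (\<alpha> - 1) - \<alpha>) *
      (\<Sum>p\<in>{p. p permutes {1..k}}. of_int (sign p) * (\<Prod>\<alpha>=1..k. X (cs ! (\<alpha> - 1), p \<alpha>)))) = cterm k X (fc k c)"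
    proof -
      have e: "fc k c \<alpha> = sorted_list_of_set c ! (\<alpha> - 1)" if "\<alpha> \<in> {1..k}" for \<alpha>
        using that by (simp add: fc_def)
      have s1: "(\<Sum>\<alpha>=1..k. sorted_list_of_set c ! (\<alpha> - 1) - \<alpha>) = (\<Sum>\<alpha>=1..k. fc k c \<alpha> - \<alpha>)"
        by (rule sum.cong[OF refl]) (simp add: e)
      have s2: "(\<Prod>\<alpha>=1..k. X (sorted_list_of_set c ! (\<alpha> - 1), p \<alpha>)) = (\<Prod>\<alpha>=1..k. X (fc k c \<alpha>, p \<alpha>))" for p
        by (rule prod.cong[OF refl]) (simp add: e)
      show ?thesis unfolding cterm_def Dk_def Let_def s1 s2 ..
    qed
  qed
  also have "\<dots> = (\<Sum>f\<in>Inc n k. cterm k X f)"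
  proof (rule sum.reindex_bij_witness[where i="\<lambda>f. f ` {1..k}" and j="fc k"])
    fix c assume "c \<in> ?C"
    then have c: "c \<subseteq> {1..n}" "card c = k" by auto
    show "fc k c ` {1..k} = c" by (rule fc_props(2)[OF c])
    show "fc k c \<in> Inc n k" by (rule fc_props(1)[OF c])
  next
    fix f assume f: "f \<in> Inc n k"
    show "fc k (f ` {1..k}) = f" by (rule fc_image[OF f])
    show "f ` {1..k} \<in> ?C" by (rule image_Inc[OF f])
  qed (rule refl)
  finally show ?thesis .
qed


definition redm :: "nat \<Rightarrow> nat \<Rightarrow> nat \<Rightarrow> nat \<Rightarrow> ((nat \<times> nat) \<Rightarrow> 'a) \<Rightarrow> ((nat \<times> nat) \<Rightarrow> 'a::zero)" where
  "redm n k i j X = (\<lambda>(r,t). if r \<in> {1..n-1} \<and> t \<in> {1..k-1} then X (sh i r, sh j t) else 0)"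

lemma Inc_ge: "f \<in> Inc n k \<Longrightarrow> \<alpha> \<in> {1..k} \<Longrightarrow> \<alpha> \<le> f \<alpha>"
proof (induction \<alpha>)
  case 0 then show ?case by simp
next
  case (Suc a)
  show ?case
  proof (cases "a = 0")
    case True then show ?thesis using Suc.prems unfolding Inc_def by simp
  next
    case False
    then have a: "a \<in> {1..k}" using Suc.prems by simp
    then have "a \<le> f a" using Suc by blast
    moreover have "f a < f (Suc a)" using Suc.prems a unfolding Inc_def by simp
    ultimately show ?thesis by simp
  qed
qed

lemma sum_partition:
  fixes U :: "'b \<Rightarrow> 'a::comm_monoid_add"
  assumes A: "finite A" and Q: "finite Q" and u: "\<And>g. g \<in> A \<Longrightarrow> U g \<noteq> 0 \<Longrightarrow> \<exists>!q. q \<in> Q \<and> P q g"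
  shows "sum U A = (\<Sum>q\<in>Q. sum U {g\<in>A. P q g})"
proof -
  have "(\<Sum>q\<in>Q. sum U {g\<in>A. P q g}) = (\<Sum>q\<in>Q. \<Sum>g\<in>A. if P q g then U g else 0)"
    by (rule sum.cong[OF refl]) (rule sum.inter_filter[OF A])
  also have "\<dots> = (\<Sum>g\<in>A. \<Sum>q\<in>Q. if P q g then U g else 0)" by (rule sum.swap)
  also have "\<dots> = (\<Sum>g\<in>A. U g)"
  proof (rule sum.cong[OF refl])
    fix g assume g: "g \<in> A"
    show "(\<Sum>q\<in>Q. if P q g then U g else 0) = U g"
    proof (cases "U g = 0")
      case True
      have "(\<Sum>q\<in>Q. if P q g then U g else 0) = (\<Sum>q\<in>Q. 0)"
        by (rule sum.cong[OF refl]) (simp add: True)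
      then show ?thesis using True by simp
    next
      case False
      then obtain q0 where q0: "q0 \<in> Q" "P q0 g" and un: "\<And>q. q \<in> Q \<Longrightarrow> P q g \<Longrightarrow> q = q0"
        using u[OF g] by blast
      have "(\<Sum>q\<in>Q. if P q g then U g else 0) = (\<Sum>q\<in>Q. if q = q0 then U g else 0)"
      proof (rule sum.cong[OF refl])
        fix q assume q: "q \<in> Q"
        show "(if P q g then U g else 0) = (if q = q0 then U g else 0)"
          using q0 un[OF q] by (cases "P q g") auto
      qed
      also have "\<dots> = U g" using Q q0(1) by (simp add: sum.delta)
      finally show ?thesis .
    qed
  qed
  finally show ?thesis ..
qed

definition Pq :: "nat \<Rightarrow> nat \<Rightarrow> nat \<Rightarrow> (nat \<Rightarrow> nat) \<Rightarrow> bool" where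
  "Pq k i q g \<longleftrightarrow> (\<forall>a\<in>{1..k-1}. (a < q \<longrightarrow> g a < i) \<and> (q \<le> a \<longrightarrow> i \<le> g a))"

definition phi :: "nat \<Rightarrow> nat \<Rightarrow> (nat \<Rightarrow> nat) \<Rightarrow> nat \<Rightarrow> nat" where
  "phi k q f = (\<lambda>a. if a \<in> {1..k-1} then (if a < q then f a else f (Suc a) - 1) else 0)"

definition psi :: "nat \<Rightarrow> nat \<Rightarrow> nat \<Rightarrow> (nat \<Rightarrow> nat) \<Rightarrow> nat \<Rightarrow> nat" where
  "psi k i q g = (\<lambda>\<alpha>. if \<alpha> \<in> {1..k} then (if \<alpha> < q then g \<alpha> else if \<alpha> = q then i else Suc (g (\<alpha> - 1))) else 0)"

lemma Pq_unique:
  assumes g: "g \<in> Inc m (k-1)" and k: "1 \<le> k"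
  shows "\<exists>!q. q \<in> {1..k} \<and> Pq k i q g"
proof -
  define q where "q = (LEAST q. q \<in> {1..k} \<and> (q = k \<or> i \<le> g q))"
  have ex: "k \<in> {1..k} \<and> (k = k \<or> i \<le> g k)" using k by simp
  have q1: "q \<in> {1..k} \<and> (q = k \<or> i \<le> g q)" unfolding q_def by (rule LeastI[where P="\<lambda>q. q \<in> {1..k} \<and> (q = k \<or> i \<le> g q)", OF ex])
  have q2: "\<not> (a \<in> {1..k} \<and> (a = k \<or> i \<le> g a))" if "a < q" for a
    using not_less_Least[of a "\<lambda>q. q \<in> {1..k} \<and> (q = k \<or> i \<le> g q)"] that unfolding q_def by blast
  have mono: "g a < g b" if "a \<in> {1..k-1}" "b \<in> {1..k-1}" "a < b" for a b
    using g that unfolding Inc_def by blast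
  have P: "Pq k i q g" unfolding Pq_def
  proof (intro ballI conjI impI)
    fix a assume a: "a \<in> {1..k-1}" "a < q"
    then show "g a < i" using q2[of a] by auto
  next
    fix a assume a: "a \<in> {1..k-1}" "q \<le> a"
    then have "q \<noteq> k" "q \<in> {1..k-1}" using q1 by auto
    then have "i \<le> g q" using q1 by auto
    moreover have "g q \<le> g a" using mono[of q a] a \<open>q \<in> {1..k-1}\<close> by (cases "q = a") auto
    ultimately show "i \<le> g a" by simp
  qed
  show ?thesis
  proof (rule ex1I[of _ q])
    show "q \<in> {1..k} \<and> Pq k i q g" using P q1 by simp
  next
    fix q' assume q': "q' \<in> {1..k} \<and> Pq k i q' g"
    show "q' = q"
    proof (rule ccontr)
      assume "q' \<noteq> q"
      then have "q' < q \<or> q < q'" by arith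
      then show False
      proof
        assume "q' < q"
        then have "q' \<in> {1..k-1}" using q1 q' by auto
        then show False using q' P \<open>q' < q\<close> unfolding Pq_def by fastforce
      next
        assume "q < q'"
        then have "q \<in> {1..k-1}" using q1 q' by auto
        then show False using q' P \<open>q < q'\<close> unfolding Pq_def by fastforce
      qed
    qed
  qed
qed


lemma IncD:
  assumes "f \<in> Inc n k"
  shows "\<And>\<alpha>. \<alpha> \<in> {1..k} \<Longrightarrow> 1 \<le> f \<alpha> \<and> f \<alpha> \<le> n"
    and "\<And>\<alpha> \<beta>. \<alpha> \<in> {1..k} \<Longrightarrow> \<beta> \<in> {1..k} \<Longrightarrow> \<alpha> < \<beta> \<Longrightarrow> f \<alpha> < f \<beta>"
    and "\<And>\<alpha>. \<alpha> \<notin> {1..k} \<Longrightarrow> f \<alpha> = 0"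
  using assms unfolding Inc_def by blast+

lemma IncI:
  assumes "\<And>\<alpha>. \<alpha> \<in> {1..k} \<Longrightarrow> 1 \<le> f \<alpha> \<and> f \<alpha> \<le> n"
    and "\<And>\<alpha> \<beta>. \<alpha> \<in> {1..k} \<Longrightarrow> \<beta> \<in> {1..k} \<Longrightarrow> \<alpha> < \<beta> \<Longrightarrow> f \<alpha> < f \<beta>"
    and "\<And>\<alpha>. \<alpha> \<notin> {1..k} \<Longrightarrow> f \<alpha> = 0"
  shows "f \<in> Inc n k"
  using assms unfolding Inc_def by blast

lemma phi_vals:
  assumes f: "f \<in> Inc n k" and fq: "f q = i" and q: "q \<in> {1..k}" and a: "a \<in> {1..k-1}"
  shows "a < q \<Longrightarrow> phi k q f a = f a \<and> f a < i \<and> 1 \<le> f a"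
    and "q \<le> a \<Longrightarrow> phi k q f a = f (Suc a) - 1 \<and> i < f (Suc a) \<and> f (Suc a) \<le> n"
proof -
  assume aq: "a < q"
  have am: "a \<in> {1..k}" using a by auto
  have "f a < f q" by (rule IncD(2)[OF f am q aq])
  moreover have "1 \<le> f a" using IncD(1)[OF f am] by simp
  ultimately have "f a < f q" "1 \<le> f a" by simp_all
  then show "phi k q f a = f a \<and> f a < i \<and> 1 \<le> f a" using a aq fq unfolding phi_def by simp
next
  assume aq: "q \<le> a"
  have am: "Suc a \<in> {1..k}" using a by auto
  have qa: "q < Suc a" using aq by simp
  have "f q < f (Suc a)" by (rule IncD(2)[OF f q am qa])
  moreover have "f (Suc a) \<le> n" using IncD(1)[OF f am] by simp
  ultimately have "f q < f (Suc a)" "f (Suc a) \<le> n" by simp_all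
  then show "phi k q f a = f (Suc a) - 1 \<and> i < f (Suc a) \<and> f (Suc a) \<le> n" using a aq fq unfolding phi_def by simp
qed

lemma phi_Inc:
  assumes f: "f \<in> Inc n k" and fq: "f q = i" and q: "q \<in> {1..k}" and i: "i \<in> {1..n}"
  shows "phi k q f \<in> Inc (n-1) (k-1)" "Pq k i q (phi k q f)"
proof -
  note v = phi_vals[OF f fq q]
  show "phi k q f \<in> Inc (n-1) (k-1)"
  proof (rule IncI)
    fix a assume a: "a \<in> {1..k-1}"
    show "1 \<le> phi k q f a \<and> phi k q f a \<le> n - 1"
    proof (cases "a < q")
      case True then show ?thesis using v(1)[OF a] i by auto
    next
      case False then show ?thesis using v(2)[OF a] i by auto
    qed
  next
    fix a b assume a: "a \<in> {1..k-1}" and b: "b \<in> {1..k-1}" and ab: "a < b"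
    have sab: "f (Suc a) < f (Suc b)" if "q \<le> a"
      using IncD(2)[OF f, of "Suc a" "Suc b"] a b ab by auto
    have fab: "f a < f b" if "b < q"
      using IncD(2)[OF f, of a b] a b ab by auto
    show "phi k q f a < phi k q f b"
    proof (cases "b < q")
      case True then show ?thesis using v(1)[OF a] v(1)[OF b] ab fab by auto
    next
      case False
      show ?thesis
      proof (cases "a < q")
        case True then show ?thesis using v(1)[OF a] v(2)[OF b] False by auto
      next
        case False2: False
        then show ?thesis using v(2)[OF a] v(2)[OF b] False sab by auto
      qed
    qed
  next
    fix a :: nat assume "a \<notin> {1..k-1}" then show "phi k q f a = 0" unfolding phi_def by (rule if_not_P)
  qed
  show "Pq k i q (phi k q f)" unfolding Pq_def
  proof (intro ballI conjI impI)
    fix a assume a: "a \<in> {1..k-1}" "a < q" then show "phi k q f a < i" using v(1)[OF a] by simp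
  next
    fix a assume a: "a \<in> {1..k-1}" "q \<le> a" then have "phi k q f a = f (Suc a) - 1" "i < f (Suc a)" using v(2)[OF a] by auto
    then show "i \<le> phi k q f a" by arith
  qed
qed

lemma psi_Inc:
  assumes g: "g \<in> Inc (n-1) (k-1)" and P: "Pq k i q g" and q: "q \<in> {1..k}" and i: "i \<in> {1..n}"
  shows "psi k i q g \<in> Inc n k" "psi k i q g q = i"
proof -
  have gv: "1 \<le> g a \<and> g a \<le> n - 1" if "a \<in> {1..k-1}" for a using IncD(1)[OF g that] .
  have lo: "g a < i" if "a \<in> {1..k-1}" "a < q" for a using P that unfolding Pq_def by blast
  have hi: "i \<le> g a" if "a \<in> {1..k-1}" "q \<le> a" for a using P that unfolding Pq_def by blast
  have gm: "g a < g b" if "a \<in> {1..k-1}" "b \<in> {1..k-1}" "a < b" for a b using IncD(2)[OF g that] .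
  have ps1: "psi k i q g \<alpha> = g \<alpha>" if "\<alpha> \<in> {1..k}" "\<alpha> < q" for \<alpha> using that unfolding psi_def by simp
  have ps2: "psi k i q g q = i" using q unfolding psi_def by simp
  have ps3: "psi k i q g \<alpha> = Suc (g (\<alpha> - 1))" if "\<alpha> \<in> {1..k}" "q < \<alpha>" for \<alpha> using that unfolding psi_def by simp
  show "psi k i q g q = i" by (rule ps2)
  show "psi k i q g \<in> Inc n k"
  proof (rule IncI)
    fix \<alpha> assume a: "\<alpha> \<in> {1..k}"
    consider "\<alpha> < q" | "\<alpha> = q" | "q < \<alpha>" by arith
    then show "1 \<le> psi k i q g \<alpha> \<and> psi k i q g \<alpha> \<le> n"
    proof cases
      case 1
      then have "\<alpha> \<in> {1..k-1}" using a q by auto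
      then show ?thesis using ps1[OF a 1] gv[of \<alpha>] by auto
    next
      case 2 then show ?thesis using ps2 i by simp
    next
      case 3
      then have "\<alpha> - 1 \<in> {1..k-1}" using a q by auto
      then show ?thesis using ps3[OF a 3] gv[of "\<alpha> - 1"] i by auto
    qed
  next
    fix \<alpha> \<beta> assume a: "\<alpha> \<in> {1..k}" and b: "\<beta> \<in> {1..k}" and ab: "\<alpha> < \<beta>"
    consider "\<beta> < q" | "\<alpha> < q" "\<beta> = q" | "\<alpha> < q" "q < \<beta>" | "\<alpha> = q" "q < \<beta>" | "q < \<alpha>"
      using ab by arith
    then show "psi k i q g \<alpha> < psi k i q g \<beta>"
    proof cases
      case 1
      then have "\<alpha> \<in> {1..k-1}" "\<beta> \<in> {1..k-1}" using a b q ab by auto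
      then show ?thesis using ps1[OF a] ps1[OF b] 1 ab gm by simp
    next
      case 2
      then have "\<alpha> \<in> {1..k-1}" using a q by auto
      then show ?thesis using ps1[OF a] ps2 2 lo by simp
    next
      case 3
      then have "\<alpha> \<in> {1..k-1}" "\<beta> - 1 \<in> {1..k-1}" "q \<le> \<beta> - 1" using a b q by auto
      then show ?thesis using ps1[OF a] ps3[OF b] 3 lo[of \<alpha>] hi[of "\<beta> - 1"] by simp
    next
      case 4
      then have "\<beta> - 1 \<in> {1..k-1}" "q \<le> \<beta> - 1" using b q by auto
      then show ?thesis using ps2 ps3[OF b] 4 hi[of "\<beta> - 1"] by simp
    next
      case 5
      then have "\<alpha> - 1 \<in> {1..k-1}" "\<beta> - 1 \<in> {1..k-1}" "\<alpha> - 1 < \<beta> - 1" using a b q ab by auto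
      then show ?thesis using ps3[OF a] ps3[OF b] 5 ab gm[of "\<alpha> - 1" "\<beta> - 1"] by simp
    qed
  next
    fix \<alpha> :: nat assume "\<alpha> \<notin> {1..k}" then show "psi k i q g \<alpha> = 0" unfolding psi_def by (rule if_not_P)
  qed
qed

lemma phi_psi:
  assumes g: "g \<in> Inc (n-1) (k-1)" and q: "q \<in> {1..k}"
  shows "phi k q (psi k i q g) = g"
proof
  fix a show "phi k q (psi k i q g) a = g a"
  proof (cases "a \<in> {1..k-1}")
    case True
    then show ?thesis unfolding phi_def psi_def by auto
  next
    case False
    have "phi k q (psi k i q g) a = 0" unfolding phi_def by (rule if_not_P[OF False])
    then show ?thesis using IncD(3)[OF g False] by simp
  qed
qed

lemma psi_phi:
  assumes f: "f \<in> Inc n k" and fq: "f q = i" and q: "q \<in> {1..k}"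
  shows "psi k i q (phi k q f) = f"
proof
  fix \<alpha> show "psi k i q (phi k q f) \<alpha> = f \<alpha>"
  proof (cases "\<alpha> \<in> {1..k}")
    case True
    consider "\<alpha> < q" | "\<alpha> = q" | "q < \<alpha>" by arith
    then show ?thesis
    proof cases
      case 1 then show ?thesis using True q unfolding phi_def psi_def by auto
    next
      case 2 then show ?thesis using True fq unfolding psi_def by simp
    next
      case 3
      have "1 \<le> f \<alpha>" using IncD(1)[OF f True] by simp
      then show ?thesis using True 3 q unfolding phi_def psi_def by auto
    qed
  next
    case False
    have "psi k i q (phi k q f) \<alpha> = 0" unfolding psi_def by (rule if_not_P[OF False])
    then show ?thesis using IncD(3)[OF f False] by simp
  qed
qed


lemma cterm_reduce:
  assumes f: "f \<in> Inc n k" and fq: "f q = i" and q: "q \<in> {1..k}" and i: "i \<in> {1..n}" and j: "j \<in> {1..k}"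
    and col: "\<And>r. r \<in> {1..n} \<Longrightarrow> X (r, j) = (if r = i then 1 else 0)"
  shows "cterm k X f = (-1)^(i+j) * cterm (k-1) (redm n k i j X) (phi k q f)"
proof -
  let ?g = "phi k q f"
  note v = phi_vals[OF f fq q]
  have g: "?g \<in> Inc (n-1) (k-1)" using phi_Inc[OF f fq q i] by simp
  have colM: "X (f \<alpha>, j) = (if \<alpha> = q then 1 else 0)" if a: "\<alpha> \<in> {1..k}" for \<alpha>
  proof -
    have "f \<alpha> \<in> {1..n}" using IncD(1)[OF f a] by simp
    then have "X (f \<alpha>, j) = (if f \<alpha> = i then 1 else 0)" by (rule col)
    moreover have "f \<alpha> = i \<longleftrightarrow> \<alpha> = q"
      using inj_on_eq_iff[OF Inc_inj[OF f] a q] fq by simp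
    ultimately show ?thesis by simp
  qed
  have D1: "Dk k (\<lambda>\<alpha> \<beta>. X (f \<alpha>, \<beta>)) = (-1)^(q+j) * Dk (k-1) (\<lambda>a b. X (f (sh q a), sh j b))"
    by (rule laplace_unit[OF q j]) (simp add: colM)
  have shg: "sh i (?g a) = f (sh q a)" if a: "a \<in> {1..k-1}" for a
  proof (cases "a < q")
    case True
    then have "?g a = f a" "f a < i" using v(1)[OF a] by auto
    then show ?thesis using True unfolding sh_def by simp
  next
    case False
    then have "?g a = f (Suc a) - 1" "i < f (Suc a)" using v(2)[OF a] by auto
    then have "?g a = f (Suc a) - 1" "\<not> ?g a < i" "1 \<le> f (Suc a)" by arith+
    then show ?thesis using False unfolding sh_def by simp
  qed
  have D2: "Dk (k-1) (\<lambda>a b. X (f (sh q a), sh j b)) = Dk (k-1) (\<lambda>a b. redm n k i j X (?g a, b))"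
  proof (rule Dk_cong)
    fix a b assume a: "a \<in> {1..k-1}" and b: "b \<in> {1..k-1}"
    have "?g a \<in> {1..n-1}" using IncD(1)[OF g a] by simp
    then have "redm n k i j X (?g a, b) = X (sh i (?g a), sh j b)" using b unfolding redm_def by simp
    then show "X (f (sh q a), sh j b) = redm n k i j X (?g a, b)" using shg[OF a] by simp
  qed
  have E: "(\<Sum>\<alpha>=1..k. f \<alpha> - \<alpha>) = (\<Sum>a=1..k-1. ?g a - a) + (i - q)"
  proof -
    have "(\<Sum>\<alpha>=1..k. f \<alpha> - \<alpha>) = (f q - q) + (\<Sum>\<alpha>\<in>{1..k}-{q}. f \<alpha> - \<alpha>)"
      by (rule sum.remove) (use q in auto)
    also have "(\<Sum>\<alpha>\<in>{1..k}-{q}. f \<alpha> - \<alpha>) = (\<Sum>a=1..k-1. f (sh q a) - sh q a)"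
      by (rule sum.reindex_bij_betw[symmetric]) (rule sh_bij, use q in auto)
    also have "\<dots> = (\<Sum>a=1..k-1. ?g a - a)"
    proof (rule sum.cong[OF refl])
      fix a assume a: "a \<in> {1..k-1}"
      show "f (sh q a) - sh q a = ?g a - a"
      proof (cases "a < q")
        case True
        then show ?thesis using v(1)[OF a] unfolding sh_def by simp
      next
        case False
        then have "?g a = f (Suc a) - 1" "i < f (Suc a)" using v(2)[OF a] by auto
        then show ?thesis using False unfolding sh_def by simp
      qed
    qed
    finally show ?thesis using fq by simp
  qed
  have iq: "q \<le> i" using Inc_ge[OF f q] fq by simp
  define S where "S = (\<Sum>a=1..k-1. ?g a - a)"
  define D' where "D' = Dk (k-1) (\<lambda>a b. redm n k i j X (?g a, b))"
  have pw: "(-1::'a)^(S + (i - q)) * (-1)^(q+j) = (-1)^(i+j) * (-1)^S"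
  proof -
    have e: "S + (i - q) + (q + j) = (i + j) + S" using iq by simp
    have "(-1::'a)^(S + (i - q)) * (-1)^(q+j) = (-1)^(S + (i - q) + (q + j))" by (simp only: power_add)
    also have "\<dots> = (-1)^((i + j) + S)" by (simp only: e)
    also have "\<dots> = (-1)^(i+j) * (-1)^S" by (simp only: power_add)
    finally show ?thesis .
  qed
  have "cterm k X f = (-1)^(S + (i - q)) * ((-1)^(q+j) * D')"
    unfolding cterm_def D1 D2 E S_def D'_def ..
  also have "\<dots> = ((-1)^(S + (i - q)) * (-1)^(q+j)) * D'" by (simp only: mult.assoc)
  also have "\<dots> = (-1)^(i+j) * ((-1)^S * D')" by (simp only: pw mult.assoc)
  also have "\<dots> = (-1)^(i+j) * cterm (k-1) (redm n k i j X) ?g"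
    unfolding cterm_def S_def D'_def ..
  finally show ?thesis .
qed

lemma cullis_reduce:
  assumes i: "i \<in> {1..n}" and j: "j \<in> {1..k}"
    and col: "\<And>r. r \<in> {1..n} \<Longrightarrow> X (r, j) = (if r = i then 1 else 0)"
  shows "(\<Sum>f\<in>Inc n k. cterm k X f) = (-1)^(i+j) * (\<Sum>g\<in>Inc (n-1) (k-1). cterm (k-1) (redm n k i j X) g)"
proof -
  let ?Y = "redm n k i j X"
  have L: "(\<Sum>f\<in>Inc n k. cterm k X f) = (\<Sum>q\<in>{1..k}. \<Sum>f\<in>{f\<in>Inc n k. f q = i}. cterm k X f)"
  proof (rule sum_partition[OF finite_Inc finite_atLeastAtMost])
    fix f assume f: "f \<in> Inc n k" and nz: "cterm k X f \<noteq> 0"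
    have ex: "\<exists>q\<in>{1..k}. f q = i"
    proof (rule ccontr)
      assume "\<not> (\<exists>q\<in>{1..k}. f q = i)"
      then have "\<And>\<alpha>. \<alpha> \<in> {1..k} \<Longrightarrow> X (f \<alpha>, j) = 0"
        using col IncD(1)[OF f] by fastforce
      then have "Dk k (\<lambda>\<alpha> \<beta>. X (f \<alpha>, \<beta>)) = 0" by (rule Dk_zero_col[OF j])
      then show False using nz unfolding cterm_def by simp
    qed
    then obtain q where q: "q \<in> {1..k}" "f q = i" by blast
    show "\<exists>!q. q \<in> {1..k} \<and> f q = i"
    proof (rule ex1I[of _ q])
      show "q \<in> {1..k} \<and> f q = i" using q by simp
      fix q' assume "q' \<in> {1..k} \<and> f q' = i"
      then show "q' = q" using inj_onD[OF Inc_inj[OF f], of q' q] q by simp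
    qed
  qed
  have k1: "1 \<le> k" using j by simp
  have R: "(\<Sum>g\<in>Inc (n-1) (k-1). cterm (k-1) ?Y g) = (\<Sum>q\<in>{1..k}. \<Sum>g\<in>{g\<in>Inc (n-1) (k-1). Pq k i q g}. cterm (k-1) ?Y g)"
    by (rule sum_partition[OF finite_Inc finite_atLeastAtMost]) (rule Pq_unique[OF _ k1])
  have M: "(\<Sum>f\<in>{f\<in>Inc n k. f q = i}. cterm k X f) = (-1)^(i+j) * (\<Sum>g\<in>{g\<in>Inc (n-1) (k-1). Pq k i q g}. cterm (k-1) ?Y g)"
    if q: "q \<in> {1..k}" for q
    unfolding sum_distrib_left
  proof (rule sum.reindex_bij_witness[where i="psi k i q" and j="phi k q"])
    fix f assume "f \<in> {f\<in>Inc n k. f q = i}"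
    then have f: "f \<in> Inc n k" and fq: "f q = i" by auto
    show "psi k i q (phi k q f) = f" by (rule psi_phi[OF f fq q])
    show "phi k q f \<in> {g\<in>Inc (n-1) (k-1). Pq k i q g}" using phi_Inc[OF f fq q i] by simp
    show "(-1)^(i+j) * cterm (k-1) ?Y (phi k q f) = cterm k X f"
      using cterm_reduce[OF f fq q i j col] by simp
  next
    fix g assume "g \<in> {g\<in>Inc (n-1) (k-1). Pq k i q g}"
    then have g: "g \<in> Inc (n-1) (k-1)" and P: "Pq k i q g" by auto
    show "phi k q (psi k i q g) = g" by (rule phi_psi[OF g q])
    show "psi k i q g \<in> {f\<in>Inc n k. f q = i}" using psi_Inc[OF g P q i] by simp
  qed
  let ?G = "\<lambda>q. (\<Sum>g\<in>{g\<in>Inc (n-1) (k-1). Pq k i q g}. cterm (k-1) ?Y g)"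
  have "(-1)^(i+j) * (\<Sum>q\<in>{1..k}. ?G q) = (\<Sum>q\<in>{1..k}. (-1)^(i+j) * ?G q)"
    by (rule sum_distrib_left)
  also have "\<dots> = (\<Sum>q\<in>{1..k}. \<Sum>f\<in>{f\<in>Inc n k. f q = i}. cterm k X f)"
    by (rule sum.cong[OF refl]) (rule M[symmetric])
  finally show ?thesis unfolding L R by simp
qed

lemma cullis_det_reduce:
  assumes i: "i \<in> {1..n}" and j: "j \<in> {1..k}"
    and col: "\<And>r. r \<in> {1..n} \<Longrightarrow> X (r, j) = (if r = i then 1 else 0)"
  shows "cullis_det n k X = (-1)^(i+j) * cullis_det (n-1) (k-1) (redm n k i j X)"
  unfolding cullis_Inc using cullis_reduce[OF i j col] .




interpretation FV: vector_space "fscale :: 'a::field \<Rightarrow> ('b \<Rightarrow> 'a) \<Rightarrow> ('b \<Rightarrow> 'a)"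
  by unfold_locales (auto simp: fscale_def fun_eq_iff algebra_simps)

lemma fun_sum_apply: "(\<Sum>x\<in>A. F x) e = (\<Sum>x\<in>A. F x e)"
  by (induction A rule: infinite_finite_induct) auto

lemma fscale_apply [simp]: "fscale c x e = c * x e"
  by (simp add: fscale_def)


lemma direction_eq:
  assumes V: "FV.subspace V"
  shows "direction ((\<lambda>v. s + v) ` V) = V"
proof (intro set_eqI iffI)
  fix x assume "x \<in> direction ((\<lambda>v. s + v) ` V)"
  then obtain a b where "a \<in> V" "b \<in> V" "x = (s + a) - (s + b)" unfolding direction_def by blast
  then have "x = a - b" "a \<in> V" "b \<in> V" by simp_all
  then show "x \<in> V" using FV.subspace_diff[OF V] by simp
next
  fix x assume x: "x \<in> V"
  have "0 \<in> V" using FV.subspace_0[OF V] .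
  then have "s + x \<in> (\<lambda>v. s + v) ` V" "s + 0 \<in> (\<lambda>v. s + v) ` V" using x by blast+
  moreover have "x = (s + x) - (s + 0)" by simp
  ultimately show "x \<in> direction ((\<lambda>v. s + v) ` V)" unfolding direction_def by blast
qed

lemma indep_subset:
  assumes T: "finite T" and ST: "S \<subseteq> T" and ind: "mat_indep V T"
  shows "mat_indep V S"
  unfolding mat_indep_def
proof (intro allI impI ballI)
  fix c :: "nat \<times> nat \<Rightarrow> 'a" and e
  assume h: "\<forall>v\<in>V. (\<Sum>e\<in>S. c e * v e) = 0" and e: "e \<in> S"
  define c' where "c' = (\<lambda>e. if e \<in> S then c e else 0)"
  have "\<forall>v\<in>V. (\<Sum>e\<in>T. c' e * v e) = 0"
  proof
    fix v assume v: "v \<in> V"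
    have "(\<Sum>e\<in>T. c' e * v e) = (\<Sum>e\<in>S. c' e * v e)"
      by (rule sum.mono_neutral_right[OF T ST]) (simp add: c'_def)
    also have "\<dots> = (\<Sum>e\<in>S. c e * v e)" by (rule sum.cong) (simp_all add: c'_def)
    finally show "(\<Sum>e\<in>T. c' e * v e) = 0" using h v by simp
  qed
  then have "\<forall>e\<in>T. c' e = 0" using ind unfolding mat_indep_def by blast
  then have "c' e = 0" using e ST by blast
  then show "c e = 0" using e by (simp add: c'_def)
qed


lemma dual_surj:
  fixes V :: "((nat \<times> nat) \<Rightarrow> 'a::field) set"
  assumes V: "FV.subspace V" and B: "finite B" and ind: "mat_indep V B"
  shows "\<exists>v\<in>V. \<forall>f\<in>B. v f = g f"
  using B ind
proof (induction B arbitrary: g rule: finite_induct)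
  case empty
  then show ?case using FV.subspace_0[OF V] by blast
next
  case (insert b B0)
  have ind0: "mat_indep V B0"
    by (rule indep_subset[OF _ _ insert.prems]) (use insert.hyps in auto)
  have IH: "\<exists>v. v \<in> V \<and> (\<forall>f\<in>B0. v f = g f)" for g using insert.IH[OF ind0] by blast
  have ex_u: "\<exists>u\<in>V. (\<forall>f\<in>B0. u f = 0) \<and> u b \<noteq> 0"
  proof (rule ccontr)
    assume nu: "\<not> (\<exists>u\<in>V. (\<forall>f\<in>B0. u f = 0) \<and> u b \<noteq> 0)"
    define w where "w f = (SOME v. v \<in> V \<and> (\<forall>f'\<in>B0. v f' = (if f' = f then 1 else 0)))" for f
    have w: "w f \<in> V \<and> (\<forall>f'\<in>B0. w f f' = (if f' = f then 1 else 0))" for f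
      unfolding w_def by (rule someI_ex[OF IH])
    have rep: "v b = (\<Sum>f\<in>B0. v f * w f b)" if v: "v \<in> V" for v
    proof -
      define u where "u = v - (\<Sum>f\<in>B0. fscale (v f) (w f))"
      have "(\<Sum>f\<in>B0. fscale (v f) (w f)) \<in> V"
        by (rule FV.subspace_sum[OF V]) (rule FV.subspace_scale[OF V], use w in blast)
      then have uV: "u \<in> V" unfolding u_def using FV.subspace_diff[OF V v] by blast
      have u0: "u f' = 0" if f': "f' \<in> B0" for f'
      proof -
        have "(\<Sum>f\<in>B0. fscale (v f) (w f)) f' = (\<Sum>f\<in>B0. v f * w f f')"
          by (simp add: fun_sum_apply)
        also have "\<dots> = (\<Sum>f\<in>B0. if f = f' then v f else 0)"
          by (rule sum.cong[OF refl]) (use w f' in auto)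
        also have "\<dots> = v f'" using insert.hyps(1) f' by (simp add: sum.delta)
        finally show ?thesis unfolding u_def by simp
      qed
      have "u b = 0" using nu uV u0 by blast
      moreover have "(\<Sum>f\<in>B0. fscale (v f) (w f)) b = (\<Sum>f\<in>B0. v f * w f b)"
        by (simp add: fun_sum_apply)
      ultimately show ?thesis unfolding u_def by simp
    qed
    define c where "c e = (if e = b then 1 else if e \<in> B0 then - w e b else 0)" for e
    have "\<forall>v\<in>V. (\<Sum>e\<in>insert b B0. c e * v e) = 0"
    proof
      fix v assume v: "v \<in> V"
      have "(\<Sum>e\<in>insert b B0. c e * v e) = c b * v b + (\<Sum>e\<in>B0. c e * v e)"
        using insert.hyps by (simp add: sum.insert)
      also have "(\<Sum>e\<in>B0. c e * v e) = - (\<Sum>f\<in>B0. v f * w f b)"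
        unfolding sum_negf[symmetric]
        by (rule sum.cong[OF refl]) (use insert.hyps in \<open>auto simp: c_def\<close>)
      finally show "(\<Sum>e\<in>insert b B0. c e * v e) = 0" using rep[OF v] by (simp add: c_def)
    qed
    then have "c b = 0" using insert.prems unfolding mat_indep_def by blast
    then show False by (simp add: c_def)
  qed
  then obtain u where u: "u \<in> V" "\<forall>f\<in>B0. u f = 0" "u b \<noteq> 0" by blast
  obtain v0 where v0: "v0 \<in> V" "\<forall>f\<in>B0. v0 f = g f" using IH by blast
  define v where "v = v0 + fscale ((g b - v0 b) / u b) u"
  have "v \<in> V" unfolding v_def by (rule FV.subspace_add[OF V v0(1) FV.subspace_scale[OF V u(1)]])
  moreover have "\<forall>f\<in>insert b B0. v f = g f"
    using u v0 by (auto simp: v_def)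
  ultimately show ?case by blast
qed


lemma redm_pair: "redm n k i j x (r,t) = (if r \<in> {1..n-1} \<and> t \<in> {1..k-1} then x (sh i r, sh j t) else 0)"
  unfolding redm_def by (simp only: case_prod_conv)

lemma redm_eval: "r \<in> {1..n-1} \<Longrightarrow> t \<in> {1..k-1} \<Longrightarrow> redm n k i j x (r,t) = x (sh i r, sh j t)"
  unfolding redm_pair by (rule if_P) simp

lemma redm_out: "\<not> (r \<in> {1..n-1} \<and> t \<in> {1..k-1}) \<Longrightarrow> redm n k i j x (r,t) = 0"
  unfolding redm_pair by (rule if_not_P)

lemma redm_add: "redm n k i j (x + y) = redm n k i j x + redm n k i j (y :: (nat \<times> nat) \<Rightarrow> 'a::field)"
proof (rule ext)
  fix e :: "nat \<times> nat"
  obtain r t where e: "e = (r,t)" by fastforce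
  show "redm n k i j (x + y) e = (redm n k i j x + redm n k i j y) e"
    unfolding e plus_fun_apply redm_pair by simp
qed

lemma redm_scale: "redm n k i j (fscale c x) = fscale c (redm n k i j x)"
proof (rule ext)
  fix e :: "nat \<times> nat"
  obtain r t where e: "e = (r,t)" by fastforce
  show "redm n k i j (fscale c x) e = fscale c (redm n k i j x) e"
    unfolding e fscale_apply redm_pair by simp
qed

lemma redm_zero: "redm n k i j 0 = 0"
proof (rule ext)
  fix e :: "nat \<times> nat"
  obtain r t where e: "e = (r,t)" by fastforce
  show "redm n k i j 0 e = (0 :: nat \<times> nat \<Rightarrow> 'a::zero) e"
    unfolding e zero_fun_apply redm_pair by simp
qed

lemma redm_supp: "redm n k i j x \<in> supported (idx (n-1) (k-1))"
  unfolding supported_def idx_def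
proof (intro CollectI allI impI)
  fix e :: "nat \<times> nat" assume "e \<notin> {1..n-1} \<times> {1..k-1}"
  moreover obtain r t where e: "e = (r,t)" by fastforce
  ultimately show "redm n k i j x e = 0" using redm_out by simp
qed

lemma span_redm: "redm n k i j ` FV.span S \<subseteq> FV.span (redm n k i j ` S)"
proof -
  let ?R = "redm n k i j"
  let ?T = "{x. ?R x \<in> FV.span (?R ` S)}"
  have "FV.subspace ?T" unfolding FV.subspace_def
    by (simp add: redm_add redm_scale redm_zero FV.span_zero FV.span_add FV.span_scale)
  moreover have "S \<subseteq> ?T" using FV.span_base by blast
  ultimately have "FV.span S \<subseteq> ?T" by (rule FV.span_minimal[rotated])
  then show ?thesis by blast
qed

lemma subspace_redm: "FV.subspace W \<Longrightarrow> FV.subspace (redm n k i j ` W)"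
  unfolding FV.subspace_def
proof (intro conjI ballI allI)
  assume W: "0 \<in> W \<and> (\<forall>x\<in>W. \<forall>y\<in>W. x + y \<in> W) \<and> (\<forall>c. \<forall>x\<in>W. fscale c x \<in> W)"
  show "0 \<in> redm n k i j ` W" using W redm_zero by (metis image_eqI)
  fix x y assume "x \<in> redm n k i j ` W" "y \<in> redm n k i j ` W"
  then obtain a b where "a \<in> W" "b \<in> W" "x = redm n k i j a" "y = redm n k i j b" by blast
  then show "x + y \<in> redm n k i j ` W" using W redm_add by (metis image_eqI)
next
  fix c x assume W: "0 \<in> W \<and> (\<forall>x\<in>W. \<forall>y\<in>W. x + y \<in> W) \<and> (\<forall>c. \<forall>x\<in>W. fscale c x \<in> W)"
    and "x \<in> redm n k i j ` W"
  then obtain a where "a \<in> W" "x = redm n k i j a" by blast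
  then show "fscale c x \<in> redm n k i j ` W" using W redm_scale by (metis image_eqI)
qed

lemma basis_determines:
  fixes V :: "((nat \<times> nat) \<Rightarrow> 'a::field) set"
  assumes bas: "mat_basis E V B" and fin: "finite E" and sup: "V \<subseteq> supported E"
    and v: "v \<in> V" and z: "\<forall>f\<in>B. v f = 0"
  shows "v = 0"
proof (rule ext)
  fix e
  have BE: "B \<subseteq> E" and indB: "mat_indep V B" and mx: "\<forall>e\<in>E - B. \<not> mat_indep V (insert e B)"
    using bas unfolding mat_basis_def by blast+
  have finB: "finite B" using BE fin finite_subset by blast
  show "v e = 0 e"
  proof (cases "e \<in> E")
    case False
    have "v \<in> supported E" using v sup by blast
    then have "v e = 0" using False unfolding supported_def by blast
    then show ?thesis by simp
  next
    case True
    show ?thesis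
    proof (cases "e \<in> B")
      case True then show ?thesis using z by simp
    next
      case eB: False
      then have "\<not> mat_indep V (insert e B)" using mx True by blast
      then obtain c where c: "\<forall>w\<in>V. (\<Sum>x\<in>insert e B. c x * w x) = 0" and nz: "\<exists>x\<in>insert e B. c x \<noteq> 0"
        unfolding mat_indep_def by blast
      have split: "(\<Sum>x\<in>insert e B. c x * w x) = c e * w e + (\<Sum>x\<in>B. c x * w x)" for w :: "nat \<times> nat \<Rightarrow> 'a"
        using finB eB by (simp add: sum.insert)
      have ce: "c e \<noteq> 0"
      proof
        assume ce0: "c e = 0"
        then have "\<forall>w\<in>V. (\<Sum>x\<in>B. c x * w x) = 0" using c split by simp
        then have "\<forall>x\<in>B. c x = 0" using indB unfolding mat_indep_def by blast
        then show False using nz ce0 by blast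
      qed
      have "(\<Sum>x\<in>B. c x * v x) = 0" using z by simp
      then have "c e * v e = 0" using c v split[of v] by simp
      then show ?thesis using ce by simp
    qed
  qed
qed


lemma indep_red:
  fixes ve :: "nat \<times> nat \<Rightarrow> (nat \<times> nat \<Rightarrow> 'a::field)"
  assumes finB: "finite B2" and sub: "B2 \<subseteq> B" and ve: "\<And>e f. f \<in> B \<Longrightarrow> ve e f = (if f = e then 1 else 0)"
    and rng: "\<And>r t. (r,t) \<in> B2 \<Longrightarrow> r \<in> {1..n} \<and> t \<in> {1..k} \<and> r \<noteq> i \<and> t \<noteq> j"
    and ij: "i \<in> {1..n}" "j \<in> {1..k}"
  shows "FV.independent ((\<lambda>e. redm n k i j (ve e)) ` B2)"
    and "card ((\<lambda>e. redm n k i j (ve e)) ` B2) = card B2"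
proof -
  let ?F = "\<lambda>e. redm n k i j (ve e)"
  let ?S = "?F ` B2"
  define cr where "cr e = (if fst e < i then fst e else fst e - 1, if snd e < j then snd e else snd e - 1)" for e :: "nat \<times> nat"
  have cr: "?F e' (cr e) = (if e = e' then 1 else 0)" if e: "e \<in> B2" for e e'
  proof -
    obtain r t where rt: "e = (r,t)" by fastforce
    have h: "r \<in> {1..n} \<and> t \<in> {1..k} \<and> r \<noteq> i \<and> t \<noteq> j" using rng e rt by simp
    define r' where "r' = (if r < i then r else r - 1)"
    define t' where "t' = (if t < j then t else t - 1)"
    have r': "r' \<in> {1..n-1}" "sh i r' = r" using h ij unfolding r'_def sh_def by auto
    have t': "t' \<in> {1..k-1}" "sh j t' = t" using h ij unfolding t'_def sh_def by auto
    have "cr e = (r', t')" unfolding cr_def rt r'_def t'_def by simp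
    moreover have "?F e' (r',t') = ve e' (sh i r', sh j t')" by (rule redm_eval[OF r'(1) t'(1)])
    ultimately have "?F e' (cr e) = ve e' (r, t)" unfolding r'(2) t'(2) by simp
    also have "\<dots> = (if e = e' then 1 else 0)" using ve[of "(r,t)" e'] e sub rt by auto
    finally show ?thesis .
  qed
  have inj: "inj_on ?F B2"
  proof (rule inj_onI)
    fix x y assume x: "x \<in> B2" and y: "y \<in> B2" and e: "?F x = ?F y"
    have "?F x (cr x) = 1" using cr[OF x, of x] by simp
    then have "?F y (cr x) = 1" using e by simp
    then show "x = y" using cr[OF x, of y] by (cases "x = y") simp_all
  qed
  show "card ?S = card B2" by (rule card_image[OF inj])
  show "FV.independent ?S"
  proof (rule FV.independent_if_scalars_zero)
    show "finite ?S" using finB by simp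
    fix c x assume s0: "(\<Sum>y\<in>?S. fscale (c y) y) = 0" and x: "x \<in> ?S"
    then obtain e0 where e0: "e0 \<in> B2" "x = ?F e0" by blast
    have ev: "y (cr e0) = (if y = x then 1 else 0)" if y: "y \<in> ?S" for y
    proof -
      obtain e where e: "e \<in> B2" "y = ?F e" using y by blast
      show ?thesis
      proof (cases "e0 = e")
        case True then show ?thesis using e e0 cr[OF e0(1), of e] by simp
      next
        case False
        then have "y (cr e0) = 0" using e cr[OF e0(1), of e] by simp
        moreover have "x (cr e0) = 1" using e0 cr[OF e0(1), of e0] by simp
        ultimately have "y \<noteq> x" by auto
        then show ?thesis using \<open>y (cr e0) = 0\<close> by simp
      qed
    qed
    have "0 = (\<Sum>y\<in>?S. fscale (c y) y) (cr e0)" using s0 by simp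
    also have "\<dots> = (\<Sum>y\<in>?S. c y * y (cr e0))" by (simp add: fun_sum_apply)
    also have "\<dots> = (\<Sum>y\<in>?S. if y = x then c y else 0)"
      by (rule sum.cong[OF refl]) (simp add: ev)
    also have "\<dots> = c x" using x finB by (simp add: sum.delta')
    finally show "c x = 0" by simp
  qed
qed


theorem mainTheorem7:
  fixes n k l i' j' :: nat and K :: "((nat \<times> nat) \<Rightarrow> 'a::field) set" and Bstar :: "(nat \<times> nat) set"
  assumes "1 < k" and "k \<le> n"
    and "linear_variety (idx n k) K"
    and "\<forall>X\<in>K. cullis_det n k X = 0"
    and "mat_cobasis (idx n k) (direction K) Bstar"
    and "1 \<le> i'" and "i' \<le> n" and "1 \<le> j'" and "j' \<le> k"
    and "card (Bstar \<inter> ({i'} \<times> {1..k})) = l"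
    and "Bstar \<inter> ({1..n} \<times> {j'}) = {}"
  shows "\<exists>K' :: ((nat \<times> nat) \<Rightarrow> 'a) set. linear_variety (idx (n - 1) (k - 1)) K' \<and>
           int (codim (idx (n - 1) (k - 1)) K') \<le> int (codim (idx n k) K) - int l \<and>
           (\<forall>X'\<in>K'. cullis_det (n - 1) (k - 1) X' = 0)"
proof -
  let ?E = "idx n k"
  let ?E' = "idx (n-1) (k-1)"
  have i': "i' \<in> {1..n}" and j': "j' \<in> {1..k}" using assms(6-9) by auto
  obtain s V where s: "s \<in> supported ?E" and V: "FV.subspace V" and VE: "V \<subseteq> supported ?E"
    and K: "K = (\<lambda>v. s + v) ` V"
    using assms(3) unfolding linear_variety_def by blast
  have dirK: "direction K = V" using direction_eq[OF V] K by simp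
  obtain B where bas: "mat_basis ?E V B" and Bs: "Bstar = ?E - B"
    using assms(5) unfolding mat_cobasis_def dirK by blast
  have finE: "finite ?E" unfolding idx_def by simp
  have BE: "B \<subseteq> ?E" and indB: "mat_indep V B" using bas unfolding mat_basis_def by blast+
  have finB: "finite B" using finE BE finite_subset by blast
  define ve where "ve e = (SOME v. v \<in> V \<and> (\<forall>f\<in>B. v f = (if f = e then 1 else 0)))" for e
  have ve_ex: "\<exists>v. v \<in> V \<and> (\<forall>f\<in>B. v f = (if f = e then 1 else (0::'a)))" for e
    using dual_surj[OF V finB indB, of "\<lambda>f. if f = e then 1 else 0"] by blast
  have ve: "ve e \<in> V \<and> (\<forall>f\<in>B. ve e f = (if f = e then 1 else 0))" for e
    unfolding ve_def by (rule someI_ex[OF ve_ex])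
  have veV: "ve e \<in> V" for e using ve by blast
  have veB: "f \<in> B \<Longrightarrow> ve e f = (if f = e then 1 else 0)" for e f using ve by blast
  have repV: "v = (\<Sum>e\<in>B. fscale (v e) (ve e))" if v: "v \<in> V" for v
  proof -
    define d where "d = v - (\<Sum>e\<in>B. fscale (v e) (ve e))"
    have "(\<Sum>e\<in>B. fscale (v e) (ve e)) \<in> V"
      by (rule FV.subspace_sum[OF V]) (rule FV.subspace_scale[OF V veV])
    then have dV: "d \<in> V" unfolding d_def using FV.subspace_diff[OF V v] by blast
    have "\<forall>f\<in>B. d f = 0"
    proof
      fix f assume f: "f \<in> B"
      have "(\<Sum>e\<in>B. fscale (v e) (ve e)) f = (\<Sum>e\<in>B. v e * ve e f)" by (simp add: fun_sum_apply)
      also have "\<dots> = (\<Sum>e\<in>B. if f = e then v e else 0)"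
        by (rule sum.cong[OF refl]) (simp add: veB[OF f])
      also have "\<dots> = v f" using f finB by (simp add: sum.delta)
      finally show "d f = 0" unfolding d_def by simp
    qed
    then have "d = 0" by (rule basis_determines[OF bas finE VE dV])
    then show ?thesis unfolding d_def by simp
  qed
  have "V \<subseteq> FV.span (ve ` B)"
  proof
    fix v assume v: "v \<in> V"
    have "(\<Sum>e\<in>B. fscale (v e) (ve e)) \<in> FV.span (ve ` B)"
      by (intro FV.span_sum FV.span_scale FV.span_base) simp
    then show "v \<in> FV.span (ve ` B)" using repV[OF v] by simp
  qed
  then have "FV.dim V \<le> card (ve ` B)" by (rule FV.dim_le_card) (use finB in simp)
  also have "\<dots> \<le> card B" by (rule card_image_le[OF finB])
  finally have dimV: "FV.dim V \<le> card B" .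
  have cardE: "card ?E = n * k" unfolding idx_def by (simp add: card_cartesian_product)
  have cardB: "card B \<le> n * k" using card_mono[OF finE BE] cardE by simp
  have codimK: "codim ?E K = n * k - FV.dim V" unfolding codim_def dirK cardE ..
  have codimK': "int (codim ?E K) \<ge> int (n * k) - int (card B)"
    unfolding codimK using dimV cardB by simp
  have cardBs: "card Bstar + card B = n * k"
    unfolding Bs using card_Diff_subset[OF finB BE] cardB cardE by simp
  have colB: "(i, j') \<in> B" if i: "i \<in> {1..n}" for i
  proof -
    have "(i, j') \<in> ?E" using i j' unfolding idx_def by simp
    moreover have "(i, j') \<notin> Bstar" using assms(11) i by blast
    ultimately show ?thesis unfolding Bs by blast
  qed
  define C where "C = {1..n} \<times> {j'}"
  define p where "p = s + (\<Sum>i\<in>{1..n}. fscale ((if i = i' then 1 else 0) - s (i,j')) (ve (i,j')))"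
  have w0V: "(\<Sum>i\<in>{1..n}. fscale ((if i = i' then 1 else 0) - s (i,j')) (ve (i,j'))) \<in> V"
    by (rule FV.subspace_sum[OF V]) (rule FV.subspace_scale[OF V veV])
  have pcol: "p (i,j') = (if i = i' then 1 else 0)" if i: "i \<in> {1..n}" for i
  proof -
    have "(\<Sum>i2\<in>{1..n}. fscale ((if i2 = i' then 1 else 0) - s (i2,j')) (ve (i2,j'))) (i,j')
        = (\<Sum>i2\<in>{1..n}. ((if i2 = i' then 1 else 0) - s (i2,j')) * ve (i2,j') (i,j'))"
      by (simp add: fun_sum_apply)
    also have "\<dots> = (\<Sum>i2\<in>{1..n}. if i = i2 then (if i2 = i' then 1 else 0) - s (i2,j') else 0)"
      by (rule sum.cong[OF refl]) (simp add: veB[OF colB[OF i]])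
    also have "\<dots> = (if i = i' then 1 else 0) - s (i,j')" using i by (simp add: sum.delta)
    finally show ?thesis unfolding p_def by simp
  qed
  define B' where "B' = B - C"
  define W0 where "W0 = FV.span (ve ` B')"
  have W0V: "W0 \<subseteq> V" unfolding W0_def by (rule FV.span_minimal[OF _ V]) (use veV in blast)
  have W0col: "w (i,j') = 0" if w: "w \<in> W0" and i: "i \<in> {1..n}" for w i
  proof -
    let ?Z = "{x :: nat \<times> nat \<Rightarrow> 'a. \<forall>i\<in>{1..n}. x (i,j') = 0}"
    have Z: "FV.subspace ?Z" unfolding FV.subspace_def by simp
    have "ve ` B' \<subseteq> ?Z"
    proof
      fix x assume "x \<in> ve ` B'"
      then obtain e where e: "e \<in> B'" "x = ve e" by blast
      have "x (i2, j') = 0" if i2: "i2 \<in> {1..n}" for i2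
      proof -
        have "(i2, j') \<noteq> e" using e(1) i2 unfolding B'_def C_def by blast
        then show ?thesis using e(2) veB[OF colB[OF i2]] by simp
      qed
      then show "x \<in> ?Z" by blast
    qed
    then have "W0 \<subseteq> ?Z" unfolding W0_def by (rule FV.span_minimal[OF _ Z])
    then show ?thesis using w i by blast
  qed
  let ?R = "redm n k i' j'"
  define V' where "V' = ?R ` W0"
  define K' where "K' = (\<lambda>v. ?R p + v) ` V'"
  have V'sub: "FV.subspace V'" unfolding V'_def W0_def by (rule subspace_redm[OF FV.subspace_span])
  have LV: "linear_variety ?E' K'"
    unfolding linear_variety_def
  proof (intro exI conjI)
    show "?R p \<in> supported ?E'" by (rule redm_supp)
    show "module.subspace fscale V'" using V'sub .
    show "V' \<subseteq> supported ?E'" unfolding V'_def using redm_supp by blast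
    show "K' = (\<lambda>v. ?R p + v) ` V'" unfolding K'_def ..
  qed
  have DET: "\<forall>X'\<in>K'. cullis_det (n - 1) (k - 1) X' = 0"
  proof
    fix X' assume "X' \<in> K'"
    then obtain w where w: "w \<in> W0" "X' = ?R p + ?R w" unfolding K'_def V'_def by blast
    define X where "X = p + w"
    have XK: "X \<in> K"
    proof -
      have "X = s + ((\<Sum>i\<in>{1..n}. fscale ((if i = i' then 1 else 0) - s (i,j')) (ve (i,j'))) + w)"
        unfolding X_def p_def by (simp add: add.assoc)
      moreover have "(\<Sum>i\<in>{1..n}. fscale ((if i = i' then 1 else 0) - s (i,j')) (ve (i,j'))) + w \<in> V"
        using FV.subspace_add[OF V w0V] W0V w(1) by blast
      ultimately show ?thesis unfolding K by blast
    qed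
    have Xcol: "X (r, j') = (if r = i' then 1 else 0)" if r: "r \<in> {1..n}" for r
      unfolding X_def using pcol[OF r] W0col[OF w(1) r] by simp
    have "cullis_det n k X = (-1)^(i'+j') * cullis_det (n-1) (k-1) (?R X)"
      by (rule cullis_det_reduce[OF i' j' Xcol])
    moreover have "cullis_det n k X = 0" using assms(4) XK by blast
    moreover have "?R X = X'" unfolding X_def w(2) by (rule redm_add)
    ultimately show "cullis_det (n - 1) (k - 1) X' = 0" by simp
  qed
  define Row where "Row = {i'} \<times> {1..k}"
  define B'' where "B'' = B' - Row"
  have B''B: "B'' \<subseteq> B" unfolding B''_def B'_def by blast
  have finB'': "finite B''" using finite_subset[OF B''B finB] .
  have rngB'': "r \<in> {1..n} \<and> t \<in> {1..k} \<and> r \<noteq> i' \<and> t \<noteq> j'" if "(r,t) \<in> B''" for r t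
  proof -
    have h: "(r,t) \<in> B" "(r,t) \<notin> C" "(r,t) \<notin> Row" using that unfolding B''_def B'_def by blast+
    have "(r,t) \<in> ?E" using h(1) BE by blast
    then have rt: "r \<in> {1..n}" "t \<in> {1..k}" unfolding idx_def by simp_all
    have "t \<noteq> j'" using h(2) rt(1) unfolding C_def by simp
    moreover have "r \<noteq> i'" using h(3) rt(2) unfolding Row_def by simp
    ultimately show ?thesis using rt by simp
  qed
  let ?S = "(\<lambda>e. ?R (ve e)) ` B''"
  have indS: "FV.independent ?S" and cardS: "card ?S = card B''"
    using indep_red[OF finB'' B''B veB rngB'' i' j'] by blast+
  have SV': "?S \<subseteq> V'"
  proof
    fix x assume "x \<in> ?S"
    then obtain e where e: "e \<in> B''" "x = ?R (ve e)" by blast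
    have "ve e \<in> W0" unfolding W0_def using e(1) unfolding B''_def by (intro FV.span_base) blast
    then show "x \<in> V'" unfolding V'_def using e(2) by blast
  qed
  have V'span: "V' \<subseteq> FV.span (?R ` ve ` B')" unfolding V'_def W0_def by (rule span_redm)
  have finB': "finite B'" unfolding B'_def using finB by simp
  obtain B0 where B0: "B0 \<subseteq> V'" "FV.independent B0" "V' \<subseteq> FV.span B0" "card B0 = FV.dim V'"
    by (rule FV.basis_exists)
  have B0sp: "B0 \<subseteq> FV.span (?R ` ve ` B')" using B0(1) V'span by (rule order_trans)
  have finRB: "finite (?R ` ve ` B')" using finB' by simp
  have finB0: "finite B0" using FV.independent_span_bound[OF finRB B0(2) B0sp] by (rule conjunct1)
  have Ssp: "?S \<subseteq> FV.span B0" using SV' B0(3) by (rule order_trans)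
  have "card ?S \<le> card B0" using FV.independent_span_bound[OF finB0 indS Ssp] by (rule conjunct2)
  then have dimV': "card B'' \<le> FV.dim V'" using cardS B0(4) by simp
  have dirK': "direction K' = V'" unfolding K'_def by (rule direction_eq[OF V'sub])
  have cardE': "card ?E' = (n-1) * (k-1)" unfolding idx_def by (simp add: card_cartesian_product)
  have codimK'': "codim ?E' K' = (n-1) * (k-1) - FV.dim V'" unfolding codim_def dirK' cardE' ..
  have CB: "C \<subseteq> B" unfolding C_def using colB by blast
  have cardC: "card C = n" unfolding C_def by (simp add: card_cartesian_product)
  have c1: "card B' + n = card B" unfolding B'_def using card_Diff_subset[OF _ CB] card_mono[OF finB CB] cardC
    finite_subset[OF CB finB] by simp
  have c2: "card B'' + card (B' \<inter> Row) = card B'"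
  proof -
    have f: "finite (B' \<inter> Row)" using finB' by simp
    have "card B'' = card B' - card (B' \<inter> Row)" unfolding B''_def by (rule card_Diff_subset_Int[OF f])
    moreover have "card (B' \<inter> Row) \<le> card B'" by (rule card_mono[OF finB']) blast
    ultimately show ?thesis by simp
  qed
  have RowE: "Row \<subseteq> ?E" unfolding Row_def idx_def using i' by auto
  have finRow: "finite Row" unfolding Row_def by simp
  have cardRow: "card Row = k" unfolding Row_def by (simp add: card_cartesian_product)
  have ijB: "(i', j') \<in> B \<inter> Row" using colB[OF i'] j' unfolding Row_def by simp
  have eqR: "B' \<inter> Row = (B \<inter> Row) - {(i',j')}" using i' unfolding B'_def C_def Row_def by auto
  have finBR: "finite (B \<inter> Row)" using finB by simp
  have cd1: "card ((B \<inter> Row) - {(i',j')}) = card (B \<inter> Row) - 1" by (rule card_Diff_singleton[OF ijB])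
  have "card (B \<inter> Row) > 0" using finBR ijB card_gt_0_iff by blast
  then have c3: "card (B' \<inter> Row) + 1 = card (B \<inter> Row)" unfolding eqR cd1 by simp
  have "Bstar \<inter> Row = Row - (B \<inter> Row)" unfolding Bs using RowE by blast
  then have "card (Bstar \<inter> Row) = card Row - card (B \<inter> Row)"
    using card_Diff_subset[OF _ Int_lower2[of B Row]] finite_subset[OF Int_lower2[of B Row] finRow] by simp
  moreover have "card (B \<inter> Row) \<le> card Row" by (rule card_mono[OF finRow]) blast
  ultimately have c4: "card (B \<inter> Row) + l = k" using assms(10) cardRow unfolding Row_def by simp
  have finBs: "finite Bstar" unfolding Bs using finE by simp
  have lBs: "l \<le> card Bstar" unfolding assms(10)[symmetric] by (rule card_mono[OF finBs Int_lower1])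
  have k1: "1 \<le> k" and n1: "1 \<le> n" using assms(1,2) by auto
  have prodeq: "int ((n-1) * (k-1)) = int n * int k - int n - int k + 1"
  proof -
    have "n = Suc (n - 1)" "k = Suc (k - 1)" using k1 n1 by simp_all
    then obtain a b where ab: "n = Suc a" "k = Suc b" by blast
    show ?thesis unfolding ab by (simp add: algebra_simps)
  qed
  have CODIM: "int (codim ?E' K') \<le> int (codim ?E K) - int l"
  proof (cases "FV.dim V' \<le> (n-1) * (k-1)")
    case True
    then have "int (codim ?E' K') = int ((n-1) * (k-1)) - int (FV.dim V')"
      unfolding codimK'' by (simp add: of_nat_diff)
    moreover have "int (n * k) = int n * int k" by simp
    ultimately show ?thesis using prodeq dimV' codimK' c1 c2 c3 c4 by linarith
  next
    case False
    then have "codim ?E' K' = 0" unfolding codimK'' by simp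
    then show ?thesis using codimK' cardBs lBs by linarith
  qed
  show ?thesis using LV CODIM DET by blast
qed


end
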